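(* Let $T$ be an equilateral hyperbolic triangle with side length $a$ and angle $\alpha$, and suppose that either $e^a\in\mathbb{Q}$ or $e^{i\alpha}\in\mathbb{Q}[i]$. Let $\ell$ be the length of a median of $T$ (the geodesic segment from a vertex to the midpoint of the opposite side, which for an equilateral triangle coincides with the area bisector from that vertex). Then $e^\ell\notin\mathbb{Q}$.
   Context: Triangles are non-degenerate, bounded triangles in the hyperbolic plane (curvature $-1$). An area bisector from a vertex is the geodesic segment from that vertex to the opposite side dividing the triangle into two triangles of equal area. *)

theory Defs
  imports "HOL-Analysis.Analysis"
begin

text \<open>Hyperboloid model of the hyperbolic plane (curvature -1):
  points p = (x0,x1,x2) with x0^2 - x1^2 - x2^2 = 1 and x0 > 0.\<close>

type_synonym pt = "real \<times> real \<times> real"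

definition lor :: "pt \<Rightarrow> pt \<Rightarrow> real" where
  "lor p q = fst p * fst q - fst (snd p) * fst (snd q) - snd (snd p) * snd (snd q)"

definition hpoint :: "pt \<Rightarrow> bool" where
  "hpoint p \<longleftrightarrow> lor p p = 1 \<and> fst p > 0"

definition hdist :: "pt \<Rightarrow> pt \<Rightarrow> real" where
  "hdist p q = arcosh (lor p q)"

text \<open>Unit-speed-independent tangent vector at P pointing along the geodesic towards Q.\<close>
definition tangent_towards :: "pt \<Rightarrow> pt \<Rightarrow> pt" where
  "tangent_towards P Q = Q - scaleR (lor P Q) P"

text \<open>Angle at vertex Q between geodesics QP and QR (the Riemannian angle;
  -lor is positive definite on the tangent space).\<close>
definition hangle :: "pt \<Rightarrow> pt \<Rightarrow> pt \<Rightarrow> real" where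
  "hangle P Q R =
     (let u = tangent_towards Q P; v = tangent_towards Q R in
      arccos (- lor u v / (sqrt (- lor u u) * sqrt (- lor v v))))"

definition hmidpoint :: "pt \<Rightarrow> pt \<Rightarrow> pt \<Rightarrow> bool" where
  "hmidpoint B C M \<longleftrightarrow> hpoint M \<and> hdist B M = hdist B C / 2 \<and> hdist M C = hdist B C / 2"

text \<open>Three points lie on a common geodesic iff they are linearly dependent in R^3.\<close>
definition hcollinear :: "pt \<Rightarrow> pt \<Rightarrow> pt \<Rightarrow> bool" where
  "hcollinear A B C \<longleftrightarrow> (\<exists>x y z. (x,y,z) \<noteq> (0,0,0) \<and> scaleR x A + scaleR y B + scaleR z C = 0)"

end

theory Submission
  imports Defs "HOL-Computational_Algebra.Computational_Algebra"
begin


lemma coprime_power_int: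
  fixes a b c :: int
  assumes "a > 0" "b > 0" "coprime a b" "a * b = c ^ n" "n > 0"
  shows "\<exists>s>0. a = s ^ n"
proof -
  have ab0: "a * b = \<bar>a * b\<bar>" using assms(1,2) by simp
  have ab: "a * b = \<bar>c\<bar> ^ n" using ab0 assms(4) by (simp add: power_abs)
  have "nat a * nat b = (nat \<bar>c\<bar>) ^ n" using ab assms
    by (simp add: nat_mult_distrib[symmetric] nat_power_eq)
  moreover have "coprime (nat a) (nat b)"
  proof -
    have "coprime (int (nat a)) (int (nat b))" using assms by simp
    then show ?thesis by (simp only: coprime_int_iff)
  qed
  ultimately have "is_nth_power n (nat a)" using assms
    by (intro is_nth_power_mult_coprime_natD(1)[of "nat a" "nat b"]) auto
  then obtain y where "nat a = y ^ n" by (auto elim: is_nth_powerE)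
  then have "int (nat a) = int y ^ n" by simp
  then have ay: "a = int y ^ n" using assms by simp
  moreover have "int y > 0"
  proof (rule ccontr)
    assume "\<not> int y > 0"
    then have "y = 0" by simp
    then show False using assms(1,5) ay by (simp add: power_0_left)
  qed
  ultimately show ?thesis by blast
qed

lemma odd_sq8: "odd (x::int) \<Longrightarrow> \<exists>T. x^2 = 8* T+1"
proof -
  assume "odd x"
  then obtain j where j: "x = 2* j+1" by (meson oddE)
  have "even (j* (j+1))" by simp
  then obtain T where T: "j* (j+1) = 2* T" by blast
  have "x^2 = 4* (j* (j+1)) + 1" unfolding j by (simp add: algebra_simps power2_eq_square)
  then show ?thesis using T by (intro exI[of _ T]) simp
qed

lemma coprime_by_primes:
  fixes a b :: int
  assumes "\<And>r. prime r \<Longrightarrow> r dvd a \<Longrightarrow> r dvd b \<Longrightarrow> False" "a \<noteq> 0"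
  shows "coprime a b"
  by (smt (verit, best) assms(1,2) coprimeI dvdE dvd_mult mult.commute
    mult_eq_0_iff prime_divisor_exists)

lemma step_case1:
  fixes p m n :: int
  assumes "odd p" "\<not> (even m \<and> even n)"
    and "p^2 = 3* m^4 - n^4 - 2* m^2* n^2"
  shows False
proof (cases "even m")
  case True
  then have "odd n" using assms by auto
  obtain k where k: "m = 2* k" using True by blast
  obtain l where l: "n = 2* l+1" using \<open>odd n\<close> by (meson oddE)
  obtain j where j: "p = 2* j+1" using assms(1) by (meson oddE)
  have id: "(4* (j^2+j) + 2) - 4* (12* k^4 - (4* l^4+8* l^3+6* l^2+2* l) - 2* k^2* (4* l^2+4* l+1))
     = p^2 - (3* m^4 - n^4 - 2* m^2* n^2)"
    unfolding j k l by algebra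
  have "4* (j^2+j) + 2 = 4* (12* k^4 - (4* l^4+8* l^3+6* l^2+2* l) - 2* k^2* (4* l^2+4* l+1))"
    using id assms(3) by linarith
  then show False by presburger
next
  case False
  obtain k where k: "m = 2* k+1" using False by (meson oddE)
  show False
  proof (cases "even n")
    case True
    obtain l where l: "n = 2* l" using True by blast
    obtain j where j: "p = 2* j+1" using assms(1) by (meson oddE)
    have id: "(4* (j^2+j) - 2) - 4* (3* (4* k^4+8* k^3+6* k^2+2* k) - 4* l^4 - 2* (2* k+1)^2* l^2)
       = p^2 - (3* m^4 - n^4 - 2* m^2* n^2)"
      unfolding j k l by algebra
    have "4* (j^2+j) - 2 = 4* (3* (4* k^4+8* k^3+6* k^2+2* k) - 4* l^4 - 2* (2* k+1)^2* l^2)"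
      using id assms(3) by linarith
    then show False by presburger
  next
    case False
    obtain l where l: "n = 2* l+1" using False by (meson oddE)
    have "3* m^4 - n^4 - 2* m^2* n^2 = 2* (24* (k^2+k)^2+8* (k^2+k)-8* (l^2+l)^2-8* (l^2+l)-16* (k^2+k)* (l^2+l))"
      unfolding k l by algebra
    then have "p^2 = 2* (24* (k^2+k)^2+8* (k^2+k)-8* (l^2+l)^2-8* (l^2+l)-16* (k^2+k)* (l^2+l))"
      using assms(3) by simp
    then have "even (p^2)" by presburger
    then show False using assms(1) by simp
  qed
qed

lemma prime_dvd_pow: "prime (r::int) \<Longrightarrow> r dvd x ^ k \<Longrightarrow> r dvd x"
  using prime_dvd_power by blast

lemma step:
  fixes p q z :: int
  assumes p0: "p > 0" and q0: "q > 0" and cop: "coprime p q" and eq: "even q"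
    and z0: "z > 0" and E: "p^4 + p^2* q^2 + q^4 = z^2"
  shows "\<exists>g h n. g > 0 \<and> h > 0 \<and> coprime g h \<and> 0 < n \<and> n < z \<and> g^4 + g^2* h^2 + h^4 = n^2"
proof -
  obtain w where w: "q = 2* w" using eq by blast
  have w0: "w > 0" using q0 w by simp
  have op: "odd p" using cop eq not_coprimeI[of 2 p q] by auto
  have E2: "z^2 = p^4 + 4* p^2* w^2 + 16* w^4" using E unfolding w by (simp add: algebra_simps power_mult_distrib)
  have oz: "odd z"
  proof -
    have "z^2 = p^4 + 2* (2* p^2* w^2 + 8* w^4)" using E2 by simp
    moreover have "odd (p^4)" using op by simp
    ultimately have "odd (z^2)" by simp
    then show ?thesis by simp
  qed
  have ev: "even (z + p^2)" using oz op by simp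
  define P where "P = (z + p^2 + 2* w^2) div 2"
  define Q where "Q = (z - p^2 - 2* w^2) div 2"
  have hP: "2* P = z + p^2 + 2* w^2" unfolding P_def using ev by (simp add: dvd_add_left_iff)
  obtain kk where kk: "z + p^2 = 2* kk" using ev by blast
  have zk: "z - p^2 - 2* w^2 = 2* (kk - p^2 - w^2)" using kk by simp
  have hQ: "2* Q = z - p^2 - 2* w^2" unfolding Q_def zk by simp
  have PQ4: "4* (P* Q) = 12* w^4"
  proof -
    have "4* (P* Q) = (2* P)* (2* Q)" by simp
    also have "\<dots> = z^2 - (p^2+2* w^2)^2" unfolding hP hQ by (simp add: algebra_simps power2_eq_square)
    also have "\<dots> = 12* w^4" unfolding E2 by (simp add: algebra_simps power2_eq_square power4_eq_xxxx)
    finally show ?thesis .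
  qed
  then have PQ: "P* Q = 3* w^4" by simp
  have "p^2 \<ge> 0" "w^2 \<ge> 0" by simp_all
  then have P0: "P > 0" using hP z0 by linarith
  have "P* Q > 0" using PQ w0 by simp
  then have Q0: "Q > 0" using P0 zero_less_mult_pos by blast
  have PmQ: "P - Q = p^2 + 2* w^2" using hP hQ by simp
  have PpQ: "P + Q = z" using hP hQ by simp
  have copPQ: "coprime P Q"
  proof (rule coprime_by_primes)
    fix r :: int assume r: "prime r" "r dvd P" "r dvd Q"
    show False
    proof (cases "r dvd w")
      case True
      have "r dvd P - Q" using r(2,3) by (rule dvd_diff)
      then have "r dvd p^2 + 2* w^2" using PmQ by simp
      moreover have "r dvd 2* w^2" using True unfolding power2_eq_square by (intro dvd_mult dvd_mult2)
      ultimately have "r dvd p^2" by (simp add: dvd_add_left_iff)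
      then have "r dvd p" using r(1) prime_dvd_pow by blast
      moreover have "r dvd q" using True w by simp
      ultimately show False using cop r(1)
        by (meson not_coprimeI not_prime_unit)
    next
      case False
      have "r dvd P* Q" using r(2) by simp
      then have "r dvd 3* w^4" using PQ by simp
      then have "r dvd 3 \<or> r dvd w^4" using r(1) prime_dvd_mult_iff by blast
      then have "r dvd 3" using False r(1) prime_dvd_pow by blast
      have "r* r dvd P* Q" using r by (simp add: mult_dvd_mono)
      then have "r* r dvd 3* w^4" using PQ by simp
      then have "r dvd w^4" using \<open>r dvd 3\<close> r(1)
      proof -
        obtain k where "3 = r* k" using \<open>r dvd 3\<close> by blast
        have rpos: "r > 0" using r(1) prime_gt_0_int by blast
        then have "r \<noteq> 0" by simp
        from \<open>r* r dvd 3* w^4\<close> \<open>3 = r* k\<close> have "r* r dvd r* (k* w^4)" by (simp add: mult.assoc)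
        then have "r dvd k* w^4" using \<open>r \<noteq> 0\<close> by simp
        moreover have "\<not> r dvd k"
        proof
          assume "r dvd k"
          then obtain k' where "k = r* k'" by blast
          then have "3 = (r* r)* k'" using \<open>3 = r* k\<close> by simp
          then have rr3: "r* r dvd 3" by (metis dvd_triv_left)
          have "r* r > 3"
          proof -
            have "r \<ge> 2" using r(1) prime_ge_2_int by blast
            then have "2*2 \<le> r* r" using mult_mono[of 2 r 2 r] by simp
            then show ?thesis by simp
          qed
          with rr3 show False using zdvd_imp_le[of "r* r" 3] by simp
        qed
        ultimately show "r dvd w^4" using r(1) prime_dvd_mult_iff by blast
      qed
      then show False using False r(1) prime_dvd_pow by blast
    qed
  next
    show "P \<noteq> 0" using P0 by simp
  qed
  have "3 dvd P* Q" using PQ by simp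
  then have "3 dvd P \<or> 3 dvd Q" using prime_dvd_mult_iff[of "3::int"] by auto
  then show ?thesis
  proof
    assume "3 dvd P"
    then obtain P' where P': "P = 3* P'" by blast
    have P'0: "P' > 0" using P0 P' by simp
    have P'Q: "P'* Q = w^4" using PQ P' by simp
    have cop': "coprime P' Q" using copPQ P' by simp
    obtain m where m: "m > 0" "P' = m^4" using coprime_power_int[OF P'0 Q0 cop' P'Q] by auto
    obtain n where n: "n > 0" "Q = n^4" using coprime_power_int[OF Q0 P'0 _ _, of w 4] cop' P'Q
      by (auto simp: coprime_commute mult.commute)
    have "(m* n)^4 = w^4" using m n P'Q by (simp add: power_mult_distrib)
    then have wmn: "w = m* n" using m n w0 power_eq_imp_eq_base[of "m* n" 4 w] by simp
    have "p^2 = 3* m^4 - n^4 - 2* m^2* n^2" using PmQ P' m n wmn by (simp add: power_mult_distrib)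
    moreover have "\<not> (even m \<and> even n)"
    proof
      assume "even m \<and> even n"
      then have "2 dvd P'" "2 dvd Q" using m n by auto
      then show False using cop' by (meson not_coprimeI odd_one)
    qed
    ultimately show ?thesis using step_case1 op by blast
  next
    assume "3 dvd Q"
    then obtain Q' where Q': "Q = 3* Q'" by blast
    have Q'0: "Q' > 0" using Q0 Q' by simp
    have PQ': "P* Q' = w^4" using PQ Q' by simp
    have cop': "coprime P Q'" using copPQ Q' by simp
    obtain n where n: "n > 0" "P = n^4" using coprime_power_int[OF P0 Q'0 cop' PQ'] by auto
    obtain m where m: "m > 0" "Q' = m^4" using coprime_power_int[OF Q'0 P0 _ _, of w 4] cop' PQ'
      by (auto simp: coprime_commute mult.commute)
    have "(m* n)^4 = w^4" using m n PQ' by (simp add: power_mult_distrib mult.commute)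
    then have wmn: "w = m* n" using m n w0 power_eq_imp_eq_base[of "m* n" 4 w] by simp
    have copmn: "coprime m n" using cop' m n by (simp add: coprime_commute)
    define A where "A = n^2 + m^2"
    define B where "B = n^2 - 3* m^2"
    have AB: "A* B = p^2" using PmQ Q' m n wmn unfolding A_def B_def
      by (simp add: algebra_simps power_mult_distrib power2_eq_square power4_eq_xxxx)
    have "n^2 \<ge> 0" "m^2 > 0" using m by simp_all
    then have A0: "A > 0" unfolding A_def by linarith
    have "p^2 > 0" using p0 by simp
    then have B0: "B > 0" using AB A0 zero_less_mult_pos by metis
    have copAB: "coprime A B"
    proof (rule coprime_by_primes)
      fix r :: int assume r: "prime r" "r dvd A" "r dvd B"
      have "r dvd A* B" using r(2) by simp
      then have "r dvd p^2" using AB by simp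
      then have rp: "r dvd p" using r(1) prime_dvd_pow by blast
      have r2: "\<not> r dvd 2"
      proof
        assume "r dvd 2"
        then have "r \<le> 2" using zdvd_imp_le by simp
        moreover have "r \<ge> 2" using r(1) prime_ge_2_int by blast
        ultimately have "r = 2" by simp
        then show False using rp op by simp
      qed
      have "r dvd A - B" using r by simp
      then have "r dvd 4* m^2" unfolding A_def B_def by (simp add: algebra_simps)
      then have "r dvd 2* (2* m^2)" by simp
      then have "r dvd m^2" using r(1) r2 prime_dvd_mult_iff by blast
      then have rm: "r dvd m" using r(1) prime_dvd_pow by blast
      have "r dvd 3* A + B" using r by simp
      then have "r dvd 4* n^2" unfolding A_def B_def by (simp add: algebra_simps)
      then have "r dvd 2* (2* n^2)" by simp
      then have "r dvd n^2" using r(1) r2 prime_dvd_mult_iff by blast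
      then have "r dvd n" using r(1) prime_dvd_pow by blast
      then show False using rm copmn r(1) by (meson not_coprimeI not_prime_unit)
    next
      show "A \<noteq> 0" using A0 by simp
    qed
    obtain s where s: "s > 0" "A = s^2" using coprime_power_int[OF A0 B0 copAB AB] by auto
    obtain t where t: "t > 0" "B = t^2" using coprime_power_int[OF B0 A0 _ _, of p 2] copAB AB
      by (auto simp: coprime_commute mult.commute)
    have "(s* t)^2 = p^2" using AB s t by (simp add: power_mult_distrib)
    then have stp: "s* t = p" using s t p0 power_eq_imp_eq_base[of "s* t" 2 p] by simp
    have os: "odd s" and ot: "odd t" using stp op by auto
    have st4: "s^2 - t^2 = 4* m^2" using s t unfolding A_def B_def by simp
    have st4': "3* s^2 + t^2 = 4* n^2" using s t unfolding A_def B_def by simp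
    have "t < s"
    proof -
      have "m^2 > 0" using m by simp
      then have "t^2 < s^2" using st4 by linarith
      then show ?thesis using s t power_less_imp_less_base[of t 2 s] by simp
    qed
    have evst: "even (s+t)" using os ot by simp
    define G where "G = (s+t) div 2"
    define H where "H = (s-t) div 2"
    have hG: "2* G = s+t" unfolding G_def using evst by simp
    have hH: "2* H = s-t" unfolding H_def using os ot by simp
    have G0: "G > 0" using hG s t by simp
    have H0: "H > 0" using hH \<open>t < s\<close> by simp
    have GH: "G* H = m^2"
    proof -
      have "4* (G* H) = (2* G)* (2* H)" by simp
      also have "\<dots> = s^2 - t^2" unfolding hG hH by (simp add: algebra_simps power2_eq_square)
      finally show ?thesis using st4 by simp
    qed
    have copGH: "coprime G H"
    proof (rule coprime_by_primes)
      fix r :: int assume r: "prime r" "r dvd G" "r dvd H"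
      have "r dvd G* H" using r(2) by simp
      then have "r dvd m^2" using GH by simp
      then have rm: "r dvd m" using r(1) prime_dvd_pow by blast
      have "r dvd G + H" using r by simp
      moreover have "s = G + H" using hG hH by simp
      ultimately have "r dvd s" by simp
      then have "r dvd s^2" unfolding power2_eq_square by (rule dvd_mult2)
      then have "r dvd n^2 + m^2" using s unfolding A_def by simp
      moreover have "r dvd m^2" using rm unfolding power2_eq_square by (rule dvd_mult2)
      ultimately have "r dvd n^2" by (simp add: dvd_add_left_iff)
      then have "r dvd n" using r(1) prime_dvd_pow by blast
      then show False using rm copmn r(1) by (meson not_coprimeI not_prime_unit)
    next
      show "G \<noteq> 0" using G0 by simp
    qed
    obtain g where g: "g > 0" "G = g^2" using coprime_power_int[OF G0 H0 copGH GH] by auto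
    obtain h where h: "h > 0" "H = h^2" using coprime_power_int[OF H0 G0 _ _, of m 2] copGH GH
      by (auto simp: coprime_commute mult.commute)
    have copgh: "coprime g h" using copGH g h by simp
    have sg: "s = g^2 + h^2" and tg: "t = g^2 - h^2" using hG hH g h by auto
    have "4* n^2 = 4* (g^4 + g^2* h^2 + h^4)" using st4' unfolding sg tg
      by (simp add: algebra_simps power2_eq_square power4_eq_xxxx)
    then have nn: "g^4 + g^2* h^2 + h^4 = n^2" by simp
    have "n < z"
    proof -
      have "n \<le> n^4" using n(1) self_le_power[of n 4] by simp
      moreover have "m^4 > 0" using m by simp
      ultimately show ?thesis using PpQ n Q' m by linarith
    qed
    then show ?thesis using g h copgh nn n by blast
  qed
qed

lemma both_odd_impossible:
  fixes p q z :: int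
  assumes "odd p" "odd q" "p^4 + p^2* q^2 + q^4 = z^2"
  shows False
proof -
  obtain A where A: "p^2 = 8* A+1" using odd_sq8 assms(1) by blast
  obtain B where B: "q^2 = 8* B+1" using odd_sq8 assms(2) by blast
  have "p^4 = (p^2)^2" "q^4 = (q^2)^2" by (simp_all add: power_mult[symmetric])
  then have L: "p^4 + p^2* q^2 + q^4 = 8* (8* A^2+2* A + 8* A* B + A + B + 8* B^2 + 2* B) + 3"
    unfolding A B by (simp add: algebra_simps power2_eq_square)
  have "odd (z^2)" using assms(3) L by presburger
  then have "odd z" by simp
  then obtain C where C: "z^2 = 8* C+1" using odd_sq8 by blast
  show False using L C assms(3) by presburger
qed

lemma no_sol_aux:
  "\<forall>p q (z::int). nat \<bar>z\<bar> = N \<longrightarrow> p > 0 \<longrightarrow> q > 0 \<longrightarrow> coprime p q \<longrightarrow> p^4 + p^2* q^2 + q^4 \<noteq> z^2"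
proof (induction N rule: less_induct)
  case (less N)
  show ?case
  proof (intro allI impI notI)
    fix p q z :: int
    assume N: "nat \<bar>z\<bar> = N" and p0: "p > 0" and q0: "q > 0" and cop: "coprime p q"
      and E: "p^4 + p^2* q^2 + q^4 = z^2"
    define z' where "z' = \<bar>z\<bar>"
    have E': "p^4 + p^2* q^2 + q^4 = z'^2" using E unfolding z'_def by simp
    have "p^4 + p^2* q^2 + q^4 > 0" using p0 q0 by (simp add: add_pos_pos)
    then have "z' \<noteq> 0" using E' by auto
    then have z0: "z' > 0" unfolding z'_def by simp
    have IH: "\<And>g h n. g > 0 \<Longrightarrow> h > 0 \<Longrightarrow> coprime g h \<Longrightarrow> 0 < n \<Longrightarrow> n < z' \<Longrightarrow>
       g^4 + g^2* h^2 + h^4 = n^2 \<Longrightarrow> False"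
    proof -
      fix g h n :: int
      assume a: "g > 0" "h > 0" "coprime g h" "0 < n" "n < z'" "g^4 + g^2* h^2 + h^4 = n^2"
      have "nat \<bar>n\<bar> < N" using a(4,5) N unfolding z'_def by simp
      then show False using less.IH a by blast
    qed
    show False
    proof (cases "even q")
      case True
      then show False using step[OF p0 q0 cop True z0 E'] IH by blast
    next
      case False
      show False
      proof (cases "even p")
        case True
        have E'': "q^4 + q^2* p^2 + p^4 = z'^2" using E' by (simp add: algebra_simps)
        have cop': "coprime q p" using cop by (simp add: coprime_commute)
        show False using step[OF q0 p0 cop' True z0 E''] IH by blast
      next
        case False2: False
        show False using both_odd_impossible[OF False2 False E] .
      qed
    qed
  qed
qed

lemma no_sol:
  fixes p q z :: int
  assumes "p > 0" "q > 0" "coprime p q"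
  shows "p^4 + p^2* q^2 + q^4 \<noteq> z^2"
  using no_sol_aux assms by blast


lemma rat_sq_int:
  fixes Y :: real and N :: int
  assumes "Y \<in> \<rat>" "Y^2 = of_int N"
  shows "\<exists>c::int. N = c^2"
proof -
  obtain c d :: int where cd: "d > 0" "coprime c d" "Y = of_int c / of_int d"
    using Rats_cases'[OF assms(1)] by blast
  have "(of_int c / of_int d)^2 = (of_int N :: real)" using assms(2) cd(3) by simp
  then have "(of_int c)^2 / (of_int d)^2 = (of_int N :: real)" by (simp add: power_divide)
  then have "(of_int c)^2 = (of_int N :: real) * (of_int d)^2" using cd(1)
    by (simp add: divide_eq_eq)
  then have "of_int (c^2) = (of_int (N * d^2) :: real)" by simp
  then have cN: "c^2 = N * d^2" by (simp only: of_int_eq_iff)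
  have "d dvd c^2" using cN by (simp add: power2_eq_square)
  moreover have "coprime (c^2) d" using cd(2) by simp
  then have "coprime d (c^2)" using coprime_commute by blast
  ultimately have "is_unit d" using coprime_common_divisor[of d "c^2" d] by simp
  then have "d = 1" using cd(1) by simp
  then show ?thesis using cN by auto
qed
lemma no_rat:
  fixes u s w :: real
  assumes "u \<in> \<rat>" "s \<in> \<rat>" "w \<in> \<rat>" "u > 1" "u^2 - 1 = s^2" "4* u^2 - 1 = w^2"
  shows False
proof -
  define s' where "s' = \<bar>s\<bar>"
  have s'Q: "s' \<in> \<rat>" unfolding s'_def using assms(2) by (simp add: Rats_abs_iff)
  have s'2: "s'^2 = s^2" unfolding s'_def by simp
  define x where "x = u + s'"
  have xQ: "x \<in> \<rat>" unfolding x_def using assms(1) s'Q by simp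
  have x0: "x > 0" unfolding x_def s'_def using assms(4) by simp
  have inv: "x * (u - s') = 1" unfolding x_def using assms(5) s'2
    by (simp add: algebra_simps power2_eq_square)
  have key: "x^4 + x^2 + 1 = (x* w)^2"
  proof -
    have "(x* w)^2 = x^2 * (4* u^2-1)" using assms(6) by (simp add: power_mult_distrib)
    also have "4* u^2 - 1 = (x + (u - s'))^2 - 1" unfolding x_def by (simp add: algebra_simps)
    also have "x^2 * ((x + (u - s'))^2 - 1) = x^4 + 2* x^2* (x* (u-s')) + (x* (u-s'))^2 - x^2"
      by (simp add: algebra_simps power2_eq_square power4_eq_xxxx)
    also have "\<dots> = x^4 + x^2 + 1" using inv by simp
    finally show ?thesis by simp
  qed
  obtain a b :: int where ab: "b > 0" "coprime a b" "x = of_int a / of_int b"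
    using Rats_cases'[OF xQ] by blast
  have a0: "a > 0" using x0 ab by (simp add: zero_less_divide_iff)
  define Y where "Y = x* w* of_int b^2"
  have YQ: "Y \<in> \<rat>" unfolding Y_def using xQ assms(3) by simp
  have "Y^2 = (x^4 + x^2 + 1) * of_int b^4" unfolding Y_def key[symmetric]
    by (simp add: power_mult_distrib power_mult[symmetric] key)
  also have "\<dots> = of_int (a^4 + a^2* b^2 + b^4)" using ab(1) unfolding ab(3)
    by (simp add: field_simps power2_eq_square power4_eq_xxxx)
  finally have "Y^2 = of_int (a^4 + a^2* b^2 + b^4)" .
  then obtain c where "a^4 + a^2* b^2 + b^4 = c^2" using rat_sq_int[OF YQ] by blast
  then show False using no_sol[OF a0 ab(1) ab(2)] by blast
qed



lemma lor_sym: "lor p q = lor q p"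
  unfolding lor_def by (simp add: algebra_simps)

lemma lor_add_right: "lor p (q + r) = lor p q + lor p r"
  unfolding lor_def by (simp add: algebra_simps)

lemma lor_diff_right: "lor p (q - r) = lor p q - lor p r"
  unfolding lor_def by (simp add: algebra_simps)

lemma lor_scale_right: "lor p (scaleR k q) = k * lor p q"
  unfolding lor_def by (simp add: algebra_simps)

lemma lor_add_left: "lor (q + r) p = lor q p + lor r p"
  unfolding lor_def by (simp add: algebra_simps)

lemma lor_diff_left: "lor (q - r) p = lor q p - lor r p"
  unfolding lor_def by (simp add: algebra_simps)

lemma lor_scale_left: "lor (scaleR k q) p = k * lor q p"
  unfolding lor_def by (simp add: algebra_simps)

lemmas lor_lin = lor_add_right lor_diff_right lor_scale_right lor_add_left lor_diff_left lor_scale_left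

lemma lor_ge1:
  assumes "hpoint P" "hpoint Q"
  shows "lor P Q \<ge> 1"
proof -
  obtain a b c where P: "P = (a,b,c)" by (cases P) auto
  obtain d e f where Q: "Q = (d,e,f)" by (cases Q) auto
  have ha: "a^2 = 1 + b^2 + c^2" "a > 0" using assms(1) unfolding P hpoint_def lor_def
    by (simp_all add: power2_eq_square)
  have hd: "d^2 = 1 + e^2 + f^2" "d > 0" using assms(2) unfolding Q hpoint_def lor_def
    by (simp_all add: power2_eq_square)
  have L: "lor P Q = a* d - b* e - c* f" unfolding P Q lor_def by simp
  have id: "(a* d)^2 - (1 + b* e + c* f)^2 = (b-e)^2 + (c-f)^2 + (b* f - c* e)^2"
    by (simp add: power_mult_distrib ha(1) hd(1)) (simp add: algebra_simps power2_eq_square)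
  have "(1 + b* e + c* f)^2 \<le> (a* d)^2" using id
    by (smt (verit) zero_le_power2)
  then have "1 + b* e + c* f \<le> a* d" using ha(2) hd(2) power2_le_imp_le by fastforce
  then show ?thesis using L by simp
qed

lemma lor_eq1:
  assumes "lor N N = 1" "lor M M = 1" "lor M N = 1"
  shows "M = N"
proof -
  define v where "v = M - N"
  have vv: "lor v v = 0" unfolding v_def using assms
    by (simp add: lor_lin lor_sym[of N M])
  have vN: "lor v N = 0" unfolding v_def using assms by (simp add: lor_lin)
  obtain x y z where v: "v = (x,y,z)" by (cases v) auto
  obtain a b c where N: "N = (a,b,c)" by (cases N) auto
  have h1: "a^2 = 1 + b^2 + c^2" using assms(1) unfolding N lor_def by (simp add: power2_eq_square)
  have h2: "x^2 = y^2 + z^2" using vv unfolding v lor_def by (simp add: power2_eq_square)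
  have h3: "x* a = y* b + z* c" using vN unfolding v N lor_def by simp
  have id: "(y^2+z^2)* (b^2+c^2) - (y* b+z* c)^2 = (y* c - z* b)^2"
    by (simp add: algebra_simps power2_eq_square)
  have "(x* a)^2 \<le> x^2* (b^2+c^2)" using id h2 h3 by (smt (verit) zero_le_power2)
  moreover have "(x* a)^2 = x^2 * (1 + b^2 + c^2)" by (simp add: power_mult_distrib h1)
  ultimately have "x^2 \<le> 0" by (simp add: algebra_simps)
  then have "x = 0" by simp
  then have "y = 0" "z = 0" using h2 by (simp_all add: sum_power2_eq_zero_iff)
  then have "v = 0" using \<open>x = 0\<close> v by (simp add: zero_prod_def)
  then show ?thesis unfolding v_def by simp
qed


lemma hdist_eq_cosh:
  assumes "hpoint P" "hpoint Q" "hdist P Q = d"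
  shows "lor P Q = cosh d"
proof -
  have "lor P Q \<ge> 1" using lor_ge1 assms by blast
  then have "cosh (arcosh (lor P Q)) = lor P Q" by simp
  then show ?thesis using assms(3) unfolding hdist_def by simp
qed

theorem proposition4p2:
  fixes A B C M :: pt and a \<alpha> :: real
  assumes "hpoint A" "hpoint B" "hpoint C"
    and "\<not> hcollinear A B C"
    and "hdist A B = a" "hdist B C = a" "hdist C A = a"
    and "\<alpha> = hangle B A C"
    and "exp a \<in> \<rat> \<or> (Re (cis \<alpha>) \<in> \<rat> \<and> Im (cis \<alpha>) \<in> \<rat>)"
    and "hmidpoint B C M"
  shows "exp (hdist A M) \<notin> \<rat>"
proof
  assume rQ: "exp (hdist A M) \<in> \<rat>"
  have hA: "lor A A = 1" and hB: "lor B B = 1" and hC: "lor C C = 1"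
    using assms(1-3) unfolding hpoint_def by auto
  define c where "c = cosh a"
  have AB: "lor A B = c" unfolding c_def using hdist_eq_cosh assms by blast
  have BC: "lor B C = c" unfolding c_def using hdist_eq_cosh assms by blast
  have CA: "lor C A = c" unfolding c_def using hdist_eq_cosh assms by blast
  have BA: "lor B A = c" using AB lor_sym by metis
  have AC: "lor A C = c" using CA lor_sym by metis
  have CB: "lor C B = c" using BC lor_sym by metis
  have "c \<noteq> 1"
  proof
    assume "c = 1"
    then have "A = B" using lor_eq1[of B A] hA hB AB by simp
    then have "hcollinear A B C" unfolding hcollinear_def
      by (intro exI[of _ 1] exI[of _ "-1"] exI[of _ 0]) simp
    then show False using assms(4) by blast
  qed
  moreover have "c \<ge> 1" unfolding c_def by (rule cosh_real_ge_1)
  ultimately have c1: "c > 1" by simp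
  have hM: "hpoint M" and BM: "hdist B M = a/2" and MC: "hdist M C = a/2"
    using assms(6,10) unfolding hmidpoint_def by auto
  define u where "u = cosh (a/2)"
  have lBM: "lor B M = u" unfolding u_def using hdist_eq_cosh assms(2) hM BM by blast
  have lMC: "lor M C = u" unfolding u_def using hdist_eq_cosh assms(3) hM MC by blast
  have lMB: "lor M B = u" using lBM lor_sym by metis
  have u0: "u > 0" unfolding u_def by simp
  have uc: "2* u^2 = 1 + c"
    unfolding u_def c_def using cosh_double_cosh[of "a/2"] by simp
  define N where "N = scaleR (1/(2* u)) (B + C)"
  have c_u: "c = 2* u^2 - 1" using uc by simp
  have NN: "lor N N = 1" unfolding N_def using u0
    by (simp add: lor_lin hB hC BC CB field_simps c_u) (simp add: algebra_simps power2_eq_square)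
  have MN: "lor M N = 1" unfolding N_def using u0
    by (simp add: lor_lin lMB lMC field_simps)
  have MM: "lor M M = 1" using hM unfolding hpoint_def by simp
  have "M = N" using lor_eq1[OF NN MM MN] .
  define t where "t = lor A M"
  have t_eq: "t = c/u" unfolding t_def \<open>M = N\<close> N_def using u0
    by (simp add: lor_lin AB AC field_simps)
  have t1: "t \<ge> 1" unfolding t_def using lor_ge1 assms(1) hM by blast
  define T where "T = hdist A M"
  have coshT: "cosh T = t" unfolding T_def hdist_def t_def using t1 t_def by simp
  define S where "S = sinh T"
  have ST: "S^2 = t^2 - 1" unfolding S_def using cosh_square_eq[of T] coshT by simp
  define r where "r = exp T"
  have r0: "r > 0" unfolding r_def by simp
  have rQ': "r \<in> \<rat>" using rQ unfolding r_def T_def .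
  have "t + S = r" unfolding r_def S_def coshT[symmetric] by (rule cosh_plus_sinh)
  moreover have "t - S = 1/r" unfolding r_def S_def coshT[symmetric]
    using cosh_minus_sinh[of T] by (simp add: exp_minus')
  ultimately have tr: "t = (r + 1/r)/2" and Sr: "S = (r - 1/r)/2" by (simp_all add: field_simps)
  have tQ: "t \<in> \<rat>" unfolding tr using rQ' by simp
  have SQ: "S \<in> \<rat>" unfolding Sr using rQ' by simp
  have u1: "u > 1"
  proof -
    have "u^2 > 1" using uc c1 by simp
    then show ?thesis using u0 by (metis not_less power_le_one less_le_not_le)
  qed
  have t0: "t > 0" using t1 by simp
  have cut: "c = u * t" using t_eq u0 by simp
  have keyid: "(u* S)^2 = (4* u^2 - 1) * (u^2 - 1)"
  proof -
    have "(u* S)^2 = u^2 * S^2" by (simp add: power_mult_distrib)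
    also have "\<dots> = u^2 * t^2 - u^2" unfolding ST by (simp add: algebra_simps)
    also have "u^2 * t^2 = c^2" using cut by (simp add: power_mult_distrib)
    also have "c = 2* u^2 - 1" using uc by simp
    finally show ?thesis by (simp add: algebra_simps power2_eq_square)
  qed
  show False
    using assms(9)
  proof
    assume eQ: "exp a \<in> \<rat>"
    define e where "e = exp a"
    have e0: "e > 0" unfolding e_def by simp
    have "c + sinh a = e" unfolding c_def e_def by (rule cosh_plus_sinh)
    moreover have "c - sinh a = 1/e" unfolding c_def e_def
      using cosh_minus_sinh[of a] by (simp add: exp_minus')
    ultimately have ce: "c = (e + 1/e)/2" and se: "sinh a = (e - 1/e)/2" by (simp_all add: field_simps)
    have cQ: "c \<in> \<rat>" unfolding ce using eQ e_def by simp
    have shQ: "sinh a \<in> \<rat>" unfolding se using eQ e_def by simp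
    have uQ: "u \<in> \<rat>" using cut t0 cQ tQ
    proof -
      have "u = c / t" using cut t0 by simp
      then show ?thesis using cQ tQ by simp
    qed
    define s where "s = sinh a / (2* u)"
    have sQ: "s \<in> \<rat>" unfolding s_def using shQ uQ by simp
    have "(sinh a)^2 = c^2 - 1" unfolding c_def using cosh_square_eq[of a] by simp
    also have "c^2 - 1 = 4* u^2* (u^2-1)" unfolding c_u by (simp add: algebra_simps power2_eq_square)
    finally have "(sinh a)^2 = 4* u^2* (u^2-1)" .
    then have sh: "(sinh a)^2 = (4* u^2)* (u^2-1)" by simp
    have "s^2 = (sinh a)^2 / (4* u^2)" unfolding s_def by (simp add: power_divide power_mult_distrib)
    also have "\<dots> = u^2 - 1" unfolding sh using u0 by simp
    finally have s2: "u^2 - 1 = s^2" by simp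
    have "u^2 > 1" using u1 one_less_power[of u 2] by simp
    then have s_ne: "s \<noteq> 0" using s2 by auto
    define w where "w = u* S/s"
    have wQ: "w \<in> \<rat>" unfolding w_def using uQ SQ sQ by simp
    have "w^2 = (u* S)^2 / s^2" unfolding w_def by (simp add: power_divide)
    also have "\<dots> = (4* u^2 - 1) * s^2 / s^2" unfolding keyid s2 ..
    also have "\<dots> = 4* u^2 - 1" using s_ne by simp
    finally have w2: "4* u^2 - 1 = w^2" by simp
    show False using no_rat[OF uQ sQ wQ u1 s2 w2] .
  next
    assume cisQ: "Re (cis \<alpha>) \<in> \<rat> \<and> Im (cis \<alpha>) \<in> \<rat>"
    define k where "k = c/(c+1)"
    have k01: "0 \<le> k" "k \<le> 1" unfolding k_def using c1 by auto
    have alpha: "\<alpha> = arccos k"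
    proof -
      have U: "tangent_towards A B = B - scaleR c A" unfolding tangent_towards_def AB ..
      have V: "tangent_towards A C = C - scaleR c A" unfolding tangent_towards_def AC ..
      have UV: "lor (B - scaleR c A) (C - scaleR c A) = c - c^2"
        by (simp add: lor_lin AB AC BA BC CA hA power2_eq_square)
      have UU: "lor (B - scaleR c A) (B - scaleR c A) = 1 - c^2"
        by (simp add: lor_lin AB BA hA hB power2_eq_square)
      have VV: "lor (C - scaleR c A) (C - scaleR c A) = 1 - c^2"
        by (simp add: lor_lin AC CA hA hC power2_eq_square)
      have "c^2 > 1" using c1 one_less_power[of c 2] by simp
      then have pos: "c^2 - 1 > 0" by simp
      have "sqrt (- (1 - c^2)) * sqrt (- (1 - c^2)) = c^2 - 1" using pos by simp
      then have "- (c - c^2) / (sqrt (- (1 - c^2)) * sqrt (- (1 - c^2))) = k"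
        unfolding k_def using pos c1 by (simp add: field_simps power2_eq_square)
      then show ?thesis unfolding assms(8) hangle_def Let_def U V UV UU VV by simp
    qed
    have cosA: "cos \<alpha> = k" unfolding alpha using k01 by simp
    have sinA: "sin \<alpha> = sqrt (1 - k^2)" unfolding alpha using k01 by (simp add: sin_arccos)
    have kQ: "k \<in> \<rat>" using cisQ cosA by simp
    have sQ0: "sin \<alpha> \<in> \<rat>" using cisQ by simp
    have ck: "c = k/(1-k)" unfolding k_def using c1 by (simp add: field_simps)
    have cQ: "c \<in> \<rat>" unfolding ck using kQ by simp
    have uQ: "u \<in> \<rat>"
    proof -
      have "u = c / t" using cut t0 by simp
      then show ?thesis using cQ tQ by simp
    qed
    define w where "w = (c+1) * sin \<alpha>"
    have wQ: "w \<in> \<rat>" unfolding w_def using cQ sQ0 by simp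
    have sin2: "(sin \<alpha>)^2 = 1 - k^2" unfolding sinA using k01 by (simp add: power_le_one)
    have w2a: "w^2 = (c+1)^2 * (1 - k^2)" unfolding w_def sin2[symmetric] by (simp add: power_mult_distrib)
    have ck2: "(c+1)^2 * k^2 = c^2" unfolding k_def using c1 by (simp add: power_divide)
    have "w^2 = (c+1)^2 - c^2" using w2a ck2 by (simp add: right_diff_distrib)
    then have "w^2 = 2* c + 1" by (simp add: algebra_simps power2_eq_square)
    then have w2: "4* u^2 - 1 = w^2" using uc by linarith
    have w_ne: "w \<noteq> 0"
    proof
      assume "w = 0"
      then have "4* u^2 = 1" using w2 by simp
      moreover have "u^2 > 1" using u1 one_less_power[of u 2] by simp
      ultimately show False by simp
    qed
    define s where "s = u* S/w"
    have sQ: "s \<in> \<rat>" unfolding s_def using uQ SQ wQ by simp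
    have "s^2 = (u* S)^2 / w^2" unfolding s_def by (simp add: power_divide)
    also have "\<dots> = w^2 * (u^2 - 1) / w^2" unfolding keyid w2 ..
    also have "\<dots> = u^2 - 1" using w_ne by simp
    finally have s2: "u^2 - 1 = s^2" by simp
    show False using no_rat[OF uQ sQ wQ u1 s2 w2] .
  qed
qed

end
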